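(* Let $R_0,r,V_T>0$ and define, for $t\ge 0$ and $V_s>0$, $$f(t,V_s)=1+\frac{1}{2R_0(R_0+r)}\left(r^2-V_T^2\left(\frac{2\pi R_0}{V_s}+t\right)^2\right)-\cos\!\left(\frac{V_s t}{R_0}\right).$$ Let $\Omega=\{(t,V_s): V_s>0,\ 0\le t\le \frac{\pi R_0}{2V_s}\}$. Then $\frac{\partial f}{\partial V_s}(t,V_s)>0$ for all $(t,V_s)\in\Omega$. Consequently $f$, as a function of the two variables $(t,V_s)$, has no critical (in particular no minimum) points in the interior of $\Omega$, and $f$ is monotonically increasing in $V_s$ on $\Omega$: for each fixed $t\ge 0$, $V_s\mapsto f(t,V_s)$ is increasing on $\{V_s>0: t\le \pi R_0/(2V_s)\}$.
   Context: Here $R_0$ is the initial radius of the disk containing the evaders, $2r$ is the length of the sweeper's line sensor, $V_T$ is the maximal evader speed, and $V_s$ is the sweeper's speed. The times of interest are $0\le t\le \pi R_0/(2V_s)$, i.e. up to a quarter revolution of the sweeper around the disk. *)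

theory Defs
  imports "HOL-Analysis.Analysis"
begin

definition sweep_f :: "real \<Rightarrow> real \<Rightarrow> real \<Rightarrow> real \<Rightarrow> real \<Rightarrow> real" where
  "sweep_f R0 r VT t Vs =
     1 + (1 / (2 * R0 * (R0 + r))) * (r^2 - VT^2 * (2 * pi * R0 / Vs + t)^2)
       - cos (Vs * t / R0)"

definition sweep_Omega :: "real \<Rightarrow> (real \<times> real) set" where
  "sweep_Omega R0 = {(t, Vs). Vs > 0 \<and> 0 \<le> t \<and> t \<le> pi * R0 / (2 * Vs)}"

end

theory Submission
  imports Defs
begin

definition dF :: "real \<Rightarrow> real \<Rightarrow> real \<Rightarrow> real \<Rightarrow> real \<Rightarrow> real" where
  "dF R0 r VT t v = (1 / (2 * R0 * (R0 + r))) * (VT^2 * (2 * (2 * pi * R0 / v + t) * (2 * pi * R0 / v^2)))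
     + sin (v * t / R0) * (t / R0)"

lemma hasd:
  assumes "v \<noteq> 0" "R0 > 0" "r > 0"
  shows "((\<lambda>v. sweep_f R0 r VT t v) has_real_derivative dF R0 r VT t v) (at v)"
proof -
  define c where "c = 1 / (2 * R0 * (R0 + r))"
  define a where "a = 2 * pi * R0"
  have e: "sweep_f R0 r VT t = (\<lambda>v. 1 + c * (r^2 - VT^2 * (a / v + t)^2) - cos (v * t / R0))"
    by (auto simp: sweep_f_def c_def a_def fun_eq_iff)
  have e2: "dF R0 r VT t v = c * (VT^2 * (2 * (a / v + t) * (a / v^2))) + sin (v * t / R0) * (t / R0)"
    by (simp add: dF_def c_def a_def)
  have H: "((\<lambda>v. 1 + c * (r^2 - VT^2 * (a / v + t)^2) - cos (v * t / R0)) has_real_derivative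
     (c * (VT^2 * (2 * (a / v + t) * (a / v^2))) + sin (v * t / R0) * (t / R0))) (at v)"
    using assms by (auto intro!: derivative_eq_intros simp: power2_eq_square algebra_simps)
  show ?thesis using H unfolding e e2 .
qed

lemma dpos:
  assumes "R0 > 0" "r > 0" "VT > 0" "v > 0" "0 \<le> t" "t \<le> pi * R0 / (2 * v)"
  shows "dF R0 r VT t v > 0"
proof -
  have a: "(1 / (2 * R0 * (R0 + r))) * (VT^2 * (2 * (2 * pi * R0 / v + t) * (2 * pi * R0 / v^2))) > 0"
    using assms by (intro mult_pos_pos) (auto intro!: add_pos_nonneg divide_pos_pos mult_pos_pos)
  have "v * t / R0 \<le> pi / 2"
    using assms by (simp add: field_simps)
  moreover have "0 \<le> v * t / R0" using assms by simp
  ultimately have "sin (v * t / R0) \<ge> 0"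
    using pi_gt_zero by (intro sin_ge_zero) linarith+
  hence "sin (v * t / R0) * (t / R0) \<ge> 0" using assms by simp
  with a show ?thesis unfolding dF_def by linarith
qed

theorem theorem3:
  fixes R0 r VT :: real
  assumes "R0 > 0" and "r > 0" and "VT > 0"
  shows "(\<forall>(t, Vs) \<in> sweep_Omega R0.
            (\<lambda>v. sweep_f R0 r VT t v) differentiable (at Vs) \<and>
            deriv (\<lambda>v. sweep_f R0 r VT t v) Vs > 0)
       \<and> (\<forall>p \<in> interior (sweep_Omega R0).
            \<not> ((\<lambda>q. sweep_f R0 r VT (fst q) (snd q)) has_derivative (\<lambda>h. 0)) (at p))
       \<and> (\<forall>t \<ge> 0. strict_mono_on {Vs. Vs > 0 \<and> t \<le> pi * R0 / (2 * Vs)}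
                    (\<lambda>v. sweep_f R0 r VT t v))"
proof (intro conjI)
  show "\<forall>(t, Vs) \<in> sweep_Omega R0.
            (\<lambda>v. sweep_f R0 r VT t v) differentiable (at Vs) \<and>
            deriv (\<lambda>v. sweep_f R0 r VT t v) Vs > 0"
  proof (clarify)
    fix t Vs assume "(t, Vs) \<in> sweep_Omega R0"
    hence h: "Vs > 0" "0 \<le> t" "t \<le> pi * R0 / (2 * Vs)" by (auto simp: sweep_Omega_def)
    have d: "((\<lambda>v. sweep_f R0 r VT t v) has_real_derivative dF R0 r VT t Vs) (at Vs)"
      using hasd h assms by simp
    show "(\<lambda>v. sweep_f R0 r VT t v) differentiable (at Vs) \<and>
            deriv (\<lambda>v. sweep_f R0 r VT t v) Vs > 0"
      using d DERIV_imp_deriv[OF d] dpos[OF assms h] real_differentiable_def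
      by (metis differentiableI)
  qed
  show "\<forall>p \<in> interior (sweep_Omega R0).
            \<not> ((\<lambda>q. sweep_f R0 r VT (fst q) (snd q)) has_derivative (\<lambda>h. 0)) (at p)"
  proof (clarify)
    fix t Vs assume p: "(t, Vs) \<in> interior (sweep_Omega R0)"
      and hd: "((\<lambda>q. sweep_f R0 r VT (fst q) (snd q)) has_derivative (\<lambda>h. 0)) (at (t, Vs))"
    have "(t, Vs) \<in> sweep_Omega R0" using p interior_subset by blast
    hence h: "Vs > 0" "0 \<le> t" "t \<le> pi * R0 / (2 * Vs)" by (auto simp: sweep_Omega_def)
    have g: "((\<lambda>v. (t, v)) has_derivative (\<lambda>h. (0, h))) (at Vs)"
      by (auto intro!: derivative_eq_intros)
    have "((\<lambda>q. sweep_f R0 r VT (fst q) (snd q)) \<circ> (\<lambda>v. (t, v)) has_derivative (\<lambda>h. 0) \<circ> (\<lambda>h. (0, h))) (at Vs)"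
      using diff_chain_at[OF g, of "\<lambda>q. sweep_f R0 r VT (fst q) (snd q)" "\<lambda>h. 0"] hd by simp
    hence "((\<lambda>v. sweep_f R0 r VT t v) has_real_derivative 0) (at Vs)"
      by (simp add: o_def has_field_derivative_def lambda_zero)
    moreover have "((\<lambda>v. sweep_f R0 r VT t v) has_real_derivative dF R0 r VT t Vs) (at Vs)"
      using hasd h assms by simp
    ultimately have "dF R0 r VT t Vs = 0" using DERIV_unique by blast
    with dpos[OF assms h] show False by simp
  qed
  show "\<forall>t \<ge> 0. strict_mono_on {Vs. Vs > 0 \<and> t \<le> pi * R0 / (2 * Vs)}
                    (\<lambda>v. sweep_f R0 r VT t v)"
  proof (intro allI impI strict_mono_onI)
    fix t x y :: real
    assume t: "t \<ge> 0" and x: "x \<in> {Vs. Vs > 0 \<and> t \<le> pi * R0 / (2 * Vs)}"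
      and y: "y \<in> {Vs. Vs > 0 \<and> t \<le> pi * R0 / (2 * Vs)}" and xy: "x < y"
    show "sweep_f R0 r VT t x < sweep_f R0 r VT t y"
    proof (rule DERIV_pos_imp_increasing[OF xy], intro exI conjI)
      fix z assume z0: "x \<le> z" "z \<le> y"
      hence z: "x \<le> z \<and> z \<le> y" by simp
      have zp: "z > 0" using x z by auto
      have "pi * R0 / (2 * y) \<le> pi * R0 / (2 * z)"
        using zp z assms by (intro divide_left_mono) auto
      hence "t \<le> pi * R0 / (2 * z)" using y by auto
      thus "((\<lambda>v. sweep_f R0 r VT t v) has_real_derivative dF R0 r VT t z) (at z)"
        "dF R0 r VT t z > 0"
        using hasd dpos[OF assms zp t] zp assms by auto
    qed
  qed
qed

end
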